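(* Let $I\subseteq\mathbb{R}$ be an interval and $f:I\to\mathbb{R}$ a function. Let $a,b,c\in I$ be such that $\frac{a+b}{2}$, $\frac{a+c}{2}$ and $\frac{b+c}{2}$ are points of convexity of $f$ relative to the entire interval $I$. Then $$\frac{f(a)+f(b)+f(c)}{3}+f\left(\frac{a+b+c}{3}\right)\ge\frac{2}{3}\left[f\left(\frac{a+b}{2}\right)+f\left(\frac{a+c}{2}\right)+f\left(\frac{b+c}{2}\right)\right].$$
   Context: A point $p\in I$ is a point of convexity of $f$ relative to $I$ if $f(p)\le\sum_{k=1}^n\lambda_k f(x_k)$ for every finite family of points $x_1,\dots,x_n\in I$ and positive weights $\lambda_1,\dots,\lambda_n$ with $\sum_k\lambda_k=1$ and $\sum_k\lambda_k x_k=p$. *)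

theory Defs
  imports "HOL-Analysis.Analysis"
begin

definition point_of_convexity :: "(real \<Rightarrow> real) \<Rightarrow> real set \<Rightarrow> real \<Rightarrow> bool" where
  "point_of_convexity f I p \<longleftrightarrow> p \<in> I \<and>
     (\<forall>(n::nat) (x::nat \<Rightarrow> real) (lam::nat \<Rightarrow> real).
        (\<forall>k<n. x k \<in> I \<and> lam k > 0) \<and> (\<Sum>k<n. lam k) = 1 \<and> (\<Sum>k<n. lam k * x k) = p
        \<longrightarrow> f p \<le> (\<Sum>k<n. lam k * f (x k)))"

end

theory Submission
  imports Defs
begin

lemma poc2:
  assumes "point_of_convexity f I p" "u \<in> I" "v \<in> I" "0 \<le> t" "t \<le> 1"
    and "p = t * u + (1 - t) * v"
  shows "f p \<le> t * f u + (1-t) * f v"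
proof -
  consider "t = 0" | "t = 1" | "0 < t \<and> t < 1" using assms by linarith
  then show ?thesis
  proof cases
    case 1 then show ?thesis using assms by simp
  next
    case 2 then show ?thesis using assms by simp
  next
    case 3
    have H: "\<forall>k<2. (\<lambda>k. if k=0 then u else v) k \<in> I \<and> (\<lambda>k::nat. if k=0 then t else 1-t) k > 0"
      using 3 assms by (auto simp: less_2_cases_iff)
    have "f p \<le> (\<Sum>k<2. (\<lambda>k::nat. if k=0 then t else 1-t) k * f ((\<lambda>k. if k=0 then u else v) k))"
    proof -
      have "(\<forall>k<2. (\<lambda>k. if k=0 then u else v) k \<in> I \<and> (\<lambda>k::nat. if k=0 then t else 1-t) k > 0)
        \<and> (\<Sum>k<2. (\<lambda>k::nat. if k=0 then t else 1-t) k) = 1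
        \<and> (\<Sum>k<2. (\<lambda>k::nat. if k=0 then t else 1-t) k * (\<lambda>k. if k=0 then u else v) k) = p"
        using H assms(6) by (simp add: numeral_2_eq_2 lessThan_Suc)
      then show ?thesis using assms(1) unfolding point_of_convexity_def
        by (intro conjunct2[OF assms(1)[unfolded point_of_convexity_def], rule_format]) auto
    qed
    then show ?thesis by (simp add: numeral_2_eq_2 lessThan_Suc)
  qed
qed

lemma hlp:
  fixes p u s :: real
  assumes "u \<noteq> s"
  shows "p = ((p - s)/(u - s)) * u + (1 - (p - s)/(u - s)) * s"
proof -
  define k where "k = (p - s)/(u - s)"
  have h: "k*(u-s) = p - s" using assms by (simp add: k_def)
  have "k * u + (1 - k) * s = s + k*(u-s)"
    by (simp add: algebra_simps)
  then show ?thesis using h k_def by simp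
qed

lemma lin: fixes fa fb fc fs A B C D x y z :: real
  assumes "A + B = fc / 2" "C + D = 3/2 * fs"
  "x \<le> 1 / 2 * fa + (1 - 1 / 2) * fb" "y \<le> A + C" "z \<le> B + D"
  shows "2 / 3 * (x+y+z) \<le> (fa + fb + fc) / 3 + fs"
  using assms by argo

lemma lin2: fixes fa fb fc fs A B C D x y z :: real
  assumes "A + B = fa / 2" "C + D = 3/2 * fs"
  "z \<le> 1 / 2 * fb + (1 - 1 / 2) * fc" "x \<le> A + C" "y \<le> B + D"
  shows "2 / 3 * (x+y+z) \<le> (fa + fb + fc) / 3 + fs"
  using assms by argo

lemma core:
  fixes f :: "real \<Rightarrow> real"
  assumes I: "is_interval I" and "a \<in> I" "b \<in> I" "c \<in> I" and o: "a \<le> b" "b \<le> c"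
    and P1: "point_of_convexity f I ((a + b) / 2)"
    and P2: "point_of_convexity f I ((a + c) / 2)"
    and P3: "point_of_convexity f I ((b + c) / 2)"
  shows "(f a + f b + f c) / 3 + f ((a + b + c) / 3)
           \<ge> 2 / 3 * (f ((a + b) / 2) + f ((a + c) / 2) + f ((b + c) / 2))"
proof -
  define s where "s = (a+b+c)/3"
  have sI: "s \<in> I"
    using mem_is_interval_1_I[OF I \<open>a \<in> I\<close> \<open>c \<in> I\<close>, of s] o unfolding s_def by auto
  show ?thesis
  proof (cases "b \<le> s")
    case True
    define l where "l = ((a+c)/2 - s)/(c-s)"
    define m where "m = ((b+c)/2 - s)/(c-s)"
    show ?thesis
    proof (cases "c = s")
      case True
      then have "a = b" "b = c" using o unfolding s_def by auto
      then show ?thesis by simp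
    next
      case False
      then have cs: "c - s > 0" using o unfolding s_def by auto
      have l0: "0 \<le> l" "l \<le> 1" using True o cs unfolding l_def s_def by (auto simp: field_simps)
      have m0: "0 \<le> m" "m \<le> 1" using True o cs unfolding m_def s_def by (auto simp: field_simps)
      have s3: "a + b + c = 3 * s" unfolding s_def by simp
      have n: "(a+c)/2 - s + ((b+c)/2 - s) = (c-s)/2" using s3 by (simp add: field_simps)
      have "l + m = ((a+c)/2 - s + ((b+c)/2 - s)) / (c - s)" unfolding l_def m_def by (rule add_divide_distrib[symmetric])
      also have "\<dots> = 1/2" using n cs by simp
      finally have le: "l + m = 1/2" .
      have e1: "f ((a+b)/2) \<le> 1/2 * f a + (1 - 1/2) * f b"
        by (rule poc2[OF P1 \<open>a\<in>I\<close> \<open>b\<in>I\<close>]) auto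
      have e2: "f ((a+c)/2) \<le> l * f c + (1 - l) * f s"
        by (rule poc2[OF P2 \<open>c\<in>I\<close> sI l0]) (unfold l_def, rule hlp, use cs in simp)
      have e3: "f ((b+c)/2) \<le> m * f c + (1 - m) * f s"
        by (rule poc2[OF P3 \<open>c\<in>I\<close> sI m0]) (unfold m_def, rule hlp, use cs in simp)
      have "l * f c + m * f c = (l + m) * f c" by (simp add: distrib_right)
    hence q1: "l * f c + m * f c = f c / 2" using le by simp
    have "(1-l) * f s + (1-m) * f s = (2 - (l + m)) * f s" by (simp add: algebra_simps)
    hence q2: "(1-l) * f s + (1-m) * f s = 3/2 * f s" using le by simp
    note q = q1 q2
      then show ?thesis using lin[OF q1 q2 e1 e2 e3] unfolding s_def by simp
    qed
  next
    case False
    define l where "l = (s - (a+b)/2)/(s-a)"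
    define m where "m = (s - (a+c)/2)/(s-a)"
    have cs: "s - a > 0" using o False unfolding s_def by auto
    have l0: "0 \<le> l" "l \<le> 1" using False o cs unfolding l_def s_def by (auto simp: field_simps)
    have m0: "0 \<le> m" "m \<le> 1" using False o cs unfolding m_def s_def by (auto simp: field_simps)
    have s3: "a + b + c = 3 * s" unfolding s_def by simp
    have n: "s - (a+b)/2 + (s - (a+c)/2) = (s-a)/2" using s3 by (simp add: field_simps)
    have "l + m = (s - (a+b)/2 + (s - (a+c)/2)) / (s - a)" unfolding l_def m_def by (rule add_divide_distrib[symmetric])
    also have "\<dots> = 1/2" using n cs by simp
    finally have le: "l + m = 1/2" .
    have l2: "l = ((a+b)/2 - s)/(a - s)"
    proof -
      have "l = (-((a+b)/2 - s))/(-(a - s))" unfolding l_def by simp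
      then show ?thesis by (simp only: minus_divide_divide)
    qed
    have m2: "m = ((a+c)/2 - s)/(a - s)"
    proof -
      have "m = (-((a+c)/2 - s))/(-(a - s))" unfolding m_def by simp
      then show ?thesis by (simp only: minus_divide_divide)
    qed
    have e1: "f ((b+c)/2) \<le> 1/2 * f b + (1 - 1/2) * f c"
      by (rule poc2[OF P3 \<open>b\<in>I\<close> \<open>c\<in>I\<close>]) auto
    have e2: "f ((a+b)/2) \<le> l * f a + (1 - l) * f s"
      by (rule poc2[OF P1 \<open>a\<in>I\<close> sI l0]) (unfold l2, rule hlp, use cs in simp)
    have e3: "f ((a+c)/2) \<le> m * f a + (1 - m) * f s"
      by (rule poc2[OF P2 \<open>a\<in>I\<close> sI m0]) (unfold m2, rule hlp, use cs in simp)
    have "l * f a + m * f a = (l + m) * f a" by (simp add: distrib_right)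
    hence q1: "l * f a + m * f a = f a / 2" using le by simp
    have "(1-l) * f s + (1-m) * f s = (2 - (l + m)) * f s" by (simp add: algebra_simps)
    hence q2: "(1-l) * f s + (1-m) * f s = 3/2 * f s" using le by simp
    note q = q1 q2
    then show ?thesis using lin2[OF q1 q2 e1 e2 e3] unfolding s_def by simp
  qed
qed

theorem theorem3:
  fixes I :: "real set" and f :: "real \<Rightarrow> real" and a b c :: real
  assumes "is_interval I"
    and "a \<in> I" and "b \<in> I" and "c \<in> I"
    and "point_of_convexity f I ((a + b) / 2)"
    and "point_of_convexity f I ((a + c) / 2)"
    and "point_of_convexity f I ((b + c) / 2)"
  shows "(f a + f b + f c) / 3 + f ((a + b + c) / 3)
           \<ge> 2 / 3 * (f ((a + b) / 2) + f ((a + c) / 2) + f ((b + c) / 2))"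
proof -
  have sw: "(x + y)/2 = (y + x)/2" for x y :: real by simp
  consider "a \<le> b" "b \<le> c" | "a \<le> c" "c \<le> b" | "b \<le> a" "a \<le> c"
    | "b \<le> c" "c \<le> a" | "c \<le> a" "a \<le> b" | "c \<le> b" "b \<le> a" by linarith
  then show ?thesis
  proof cases
    case 1 then show ?thesis using core[of I a b c f] assms by simp
  next
    case 2 then show ?thesis using core[of I a c b f] assms by (simp add: ac_simps)
  next
    case 3 then show ?thesis using core[of I b a c f] assms by (simp add: ac_simps)
  next
    case 4 then show ?thesis using core[of I b c a f] assms by (simp add: ac_simps)
  next
    case 5 then show ?thesis using core[of I c a b f] assms by (simp add: ac_simps)
  next
    case 6 then show ?thesis using core[of I c b a f] assms by (simp add: ac_simps)
  qed
qed

end
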